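(* Let $(X,d)$ be a complete metric space and let $\mathcal{F}=\{X; f_{\lambda}\mid\lambda\in\Lambda\}$ be a parameterized iterated function system which is uniformly contracting. Then $\mathcal{F}$ has the average shadowing property on $\mathbb{Z}_+$.
   Context: A parameterized iterated function system (IFS) $\mathcal{F}=\{X; f_{\lambda}\mid\lambda\in\Lambda\}$ on a complete metric space $(X,d)$ is a family of continuous maps $f_\lambda:X\to X$ indexed by a finite nonempty set $\Lambda$. It is uniformly contracting if $\beta=\sup_{\lambda\in\Lambda}\sup_{x\ne y}\frac{d(f_\lambda(x),f_\lambda(y))}{d(x,y)}$ exists and $\beta<1$. For $\sigma=(\lambda_0,\lambda_1,\dots)\in\Lambda^{\mathbb{Z}_+}$ write $\mathcal{F}_{\sigma_n}=f_{\lambda_{n-1}}\circ\cdots\circ f_{\lambda_0}$ for $n\ge1$ and $\mathcal{F}_{\sigma_0}=\mathrm{id}_X$. For $\delta>0$, a sequence $(x_i)_{i\ge0}$ in $X$ is a $\delta$-average pseudo-orbit of $\mathcal{F}$ if there exist a natural number $N$ and $\sigma=(\lambda_0,\lambda_1,\dots)\in\Lambda^{\mathbb{Z}_+}$ such that for all $n\ge N$, $\frac1n\sum_{i=0}^{n-1}d(f_{\lambda_i}(x_i),x_{i+1})<\delta$. A sequence $(x_i)_{i\ge0}$ is $\epsilon$-shadowed in average by $z\in X$ if there exists $\sigma\in\Lambda^{\mathbb{Z}_+}$ with $\limsup_{n\to\infty}\frac1n\sum_{i=0}^{n-1}d(\mathcal{F}_{\sigma_i}(z),x_i)<\epsilon$.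 $\mathcal{F}$ has the average shadowing property (on $\mathbb{Z}_+$) if for every $\epsilon>0$ there is $\delta>0$ such that every $\delta$-average pseudo-orbit of $\mathcal{F}$ is $\epsilon$-shadowed in average by some point of $X$. *)

theory Defs
  imports "HOL-Analysis.Analysis"
begin

definition uniformly_contracting :: "'l set \<Rightarrow> ('l \<Rightarrow> 'a::metric_space \<Rightarrow> 'a) \<Rightarrow> bool" where
  "uniformly_contracting L f \<longleftrightarrow>
     (\<exists>\<beta>::real. \<beta> < 1 \<and>
        (\<forall>l\<in>L. \<forall>x y. x \<noteq> y \<longrightarrow> dist (f l x) (f l y) / dist x y \<le> \<beta>))"

fun ifs_comp :: "('l \<Rightarrow> 'a \<Rightarrow> 'a) \<Rightarrow> (nat \<Rightarrow> 'l) \<Rightarrow> nat \<Rightarrow> 'a \<Rightarrow> 'a" where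
  "ifs_comp f \<sigma> 0 = id"
| "ifs_comp f \<sigma> (Suc n) = f (\<sigma> n) \<circ> ifs_comp f \<sigma> n"

definition avg_pseudo_orbit ::
  "'l set \<Rightarrow> ('l \<Rightarrow> 'a::metric_space \<Rightarrow> 'a) \<Rightarrow> real \<Rightarrow> (nat \<Rightarrow> 'a) \<Rightarrow> bool" where
  "avg_pseudo_orbit L f \<delta> xs \<longleftrightarrow>
     (\<exists>N::nat. \<exists>\<sigma>::nat \<Rightarrow> 'l. (\<forall>i. \<sigma> i \<in> L) \<and>
        (\<forall>n\<ge>N. n > 0 \<longrightarrow> (\<Sum>i<n. dist (f (\<sigma> i) (xs i)) (xs (Suc i))) / real n < \<delta>))"

definition avg_shadowed ::
  "'l set \<Rightarrow> ('l \<Rightarrow> 'a::metric_space \<Rightarrow> 'a) \<Rightarrow> real \<Rightarrow> (nat \<Rightarrow> 'a) \<Rightarrow> 'a \<Rightarrow> bool" where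
  "avg_shadowed L f \<epsilon> xs z \<longleftrightarrow>
     (\<exists>\<sigma>::nat \<Rightarrow> 'l. (\<forall>i. \<sigma> i \<in> L) \<and>
        limsup (\<lambda>n. ereal ((\<Sum>i<n. dist (ifs_comp f \<sigma> i z) (xs i)) / real n)) < ereal \<epsilon>)"

definition average_shadowing_property ::
  "'l set \<Rightarrow> ('l \<Rightarrow> 'a::metric_space \<Rightarrow> 'a) \<Rightarrow> bool" where
  "average_shadowing_property L f \<longleftrightarrow>
     (\<forall>\<epsilon>>0. \<exists>\<delta>>0. \<forall>xs. avg_pseudo_orbit L f \<delta> xs \<longrightarrow> (\<exists>z. avg_shadowed L f \<epsilon> xs z))"

end

theory Submission
  imports Defs
begin

lemma sum_bound:
  fixes D e :: "nat \<Rightarrow> real" and b :: real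
  assumes D0: "D 0 = 0" and Dn: "\<And>i. D i \<ge> 0" and en: "\<And>i. e i \<ge> 0"
    and b0: "0 \<le> b" and b1: "b < 1"
    and step: "\<And>i. D (Suc i) \<le> b * D i + e i"
  shows "(1 - b) * (\<Sum>i<m. D i) \<le> (\<Sum>i<m. e i)"
proof (cases m)
  case 0 then show ?thesis by simp
next
  case (Suc n)
  have "(\<Sum>i<n. D (Suc i)) \<le> (\<Sum>i<n. b * D i + e i)"
    by (rule sum_mono) (rule step)
  also have "\<dots> = b * (\<Sum>i<n. D i) + (\<Sum>i<n. e i)"
    by (simp add: sum.distrib sum_distrib_left)
  finally have 1: "(\<Sum>i<n. D (Suc i)) \<le> b * (\<Sum>i<n. D i) + (\<Sum>i<n. e i)" .
  have 2: "(\<Sum>i<Suc n. D i) = (\<Sum>i<n. D (Suc i))"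
    by (subst sum.lessThan_Suc_shift) (simp add: D0)
  have 3: "(\<Sum>i<n. D i) \<le> (\<Sum>i<Suc n. D i)" using Dn by simp
  have 4: "(\<Sum>i<n. e i) \<le> (\<Sum>i<Suc n. e i)" using en by simp
  have 5: "b * (\<Sum>i<n. D i) \<le> b * (\<Sum>i<Suc n. D i)" using 3 b0 by (rule mult_left_mono)
  show ?thesis unfolding Suc using 1 2 4 5 by (simp add: algebra_simps)
qed

theorem mainTheorem2:
  fixes L :: "'l set" and f :: "'l \<Rightarrow> 'a::complete_space \<Rightarrow> 'a"
  assumes "finite L" and "L \<noteq> {}"
    and "\<forall>l\<in>L. continuous_on UNIV (f l)"
    and "uniformly_contracting L f"
  shows "average_shadowing_property L f"
proof -
  obtain \<beta>0 :: real where b0: "\<beta>0 < 1" and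
    bb: "\<forall>l\<in>L. \<forall>x y. x \<noteq> y \<longrightarrow> dist (f l x) (f l y) / dist x y \<le> \<beta>0"
    using assms(4) unfolding uniformly_contracting_def by auto
  define \<beta> where "\<beta> = max \<beta>0 0"
  have bpos: "0 \<le> \<beta>" and blt: "\<beta> < 1" using b0 by (auto simp: \<beta>_def)
  have contr: "dist (f l x) (f l y) \<le> \<beta> * dist x y" if "l \<in> L" for l x y
  proof (cases "x = y")
    case True then show ?thesis by simp
  next
    case False
    then have "dist (f l x) (f l y) / dist x y \<le> \<beta>0" using bb that by blast
    then have "dist (f l x) (f l y) \<le> \<beta>0 * dist x y" using False
      by (simp add: divide_le_eq)
    also have "\<dots> \<le> \<beta> * dist x y" by (rule mult_right_mono) (auto simp: \<beta>_def)
    finally show ?thesis .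
  qed
  show ?thesis unfolding average_shadowing_property_def
  proof (intro allI impI)
    fix \<epsilon> :: real assume ep: "\<epsilon> > 0"
    define \<delta> where "\<delta> = \<epsilon> * (1 - \<beta>) / 2"
    have dpos: "\<delta> > 0" using ep blt by (simp add: \<delta>_def)
    show "\<exists>\<delta>>0. \<forall>xs. avg_pseudo_orbit L f \<delta> xs \<longrightarrow> (\<exists>z. avg_shadowed L f \<epsilon> xs z)"
    proof (intro exI[of _ \<delta>] conjI allI impI dpos)
      fix xs assume "avg_pseudo_orbit L f \<delta> xs"
      then obtain N \<sigma> where sL: "\<forall>i. \<sigma> i \<in> L" and
        avg: "\<forall>n\<ge>N. n > 0 \<longrightarrow> (\<Sum>i<n. dist (f (\<sigma> i) (xs i)) (xs (Suc i))) / real n < \<delta>"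
        unfolding avg_pseudo_orbit_def by blast
      define D where "D i = dist (ifs_comp f \<sigma> i (xs 0)) (xs i)" for i
      define e where "e i = dist (f (\<sigma> i) (xs i)) (xs (Suc i))" for i
      have step: "D (Suc i) \<le> \<beta> * D i + e i" for i
      proof -
        have "D (Suc i) \<le> dist (f (\<sigma> i) (ifs_comp f \<sigma> i (xs 0))) (f (\<sigma> i) (xs i)) + e i"
          unfolding D_def e_def by (simp add: dist_triangle)
        also have "\<dots> \<le> \<beta> * D i + e i" unfolding D_def using contr sL by simp
        finally show ?thesis .
      qed
      have key: "(1 - \<beta>) * (\<Sum>i<m. D i) \<le> (\<Sum>i<m. e i)" for m
        by (rule sum_bound) (use step bpos blt in \<open>auto simp: D_def e_def\<close>)
      have ev: "eventually (\<lambda>n. ereal ((\<Sum>i<n. D i) / real n) \<le> ereal (\<epsilon> / 2)) sequentially"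
        unfolding eventually_sequentially
      proof (intro exI[of _ "max N 1"] allI impI)
        fix n assume n: "max N 1 \<le> n"
        then have np: "real n > 0" by simp
        have "(\<Sum>i<n. e i) / real n < \<delta>" using avg n unfolding e_def by simp
        then have "(\<Sum>i<n. e i) < \<delta> * real n" using np by (simp add: divide_less_eq)
        then have "(1 - \<beta>) * (\<Sum>i<n. D i) < \<delta> * real n" using key[of n] by linarith
        then have "(1 - \<beta>) * (\<Sum>i<n. D i) < (1 - \<beta>) * (\<epsilon> / 2 * real n)"
          by (simp add: \<delta>_def algebra_simps)
        then have "(\<Sum>i<n. D i) < \<epsilon> / 2 * real n" using blt by simp
        then have "(\<Sum>i<n. D i) / real n < \<epsilon> / 2" using np by (simp add: divide_less_eq)
        then show "ereal ((\<Sum>i<n. D i) / real n) \<le> ereal (\<epsilon> / 2)" by simp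
      qed
      have "limsup (\<lambda>n. ereal ((\<Sum>i<n. D i) / real n)) \<le> ereal (\<epsilon> / 2)"
        by (rule Limsup_bounded[OF ev])
      also have "\<dots> < ereal \<epsilon>" using ep by simp
      finally show "\<exists>z. avg_shadowed L f \<epsilon> xs z"
        unfolding avg_shadowed_def D_def using sL by blast
    qed
  qed
qed

end
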